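(* Let $G_r=(V_r,E_r)$ (virtual network) and $G_s=(V_s,E_s)$ (substrate network) be simple, connected, undirected graphs, with integer demands $d_{\bar u}$ ($\bar u\in V_r$), $d_{\bar e}$ ($\bar e\in E_r$) and integer capacities $c_u$ ($u\in V_s$), $c_e$ ($e\in E_s$). Let $(x,y)$ be the incidence vector of a feasible mapping of $G_r$ on $G_s$. Then for every virtual edge $\bar e=(\bar u,\bar v)\in E_r$ and every arc $(u,v)\in E'_s$, the flow continuity inequality $$y_{\bar e (u,v)}\le \sum_{e'\in\delta^+(v)\setminus\{(v,u)\}} y_{\bar e e'} + x_{\bar v v}$$ holds.
   Context: A mapping $m=(m_V,m_E)$ of $G_r$ on $G_s$ consists of a node placement $m_V:V_r\to V_s$ which is one-to-one (distinct virtual nodes are placed on distinct substrate nodes), and an edge routing $m_E$ assigning to each virtual edge $\bar e=\{\bar u,\bar v\}\in E_r$ a loop-free path of $G_s$ whose endpoints are $m_V(\bar u)$ and $m_V(\bar v)$. The mapping is feasible if for each $u\in V_s$ the sum of $d_{\bar u}$ over virtual nodes $\bar u$ with $m_V(\bar u)=u$ is at most $c_u$, and for each $e\in E_s$ the sum of $d_{\bar e}$ over virtual edges $\bar e$ whose routing path contains $e$ is at most $c_e$. Each virtual edge is given a fixed arbitrary orientation, written $\bar e=(\bar u,\bar v)$. Let $E'_s=\bigcup_{\{u,v\}\in E_s}\{(u,v),(v,u)\}$ be the arc set of the bidirected substrate network, and for $u\in V_s$ let $\delta^+(u)$ (resp. $\delta^-(u)$) be the set of arcs of $E'_s$ leaving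 (resp. entering) $u$. The incidence vector $(x,y)$ of a mapping $m$ has binary components $x_{\bar u u}$ ($\bar u\in V_r$, $u\in V_s$), equal to $1$ iff $m_V(\bar u)=u$, and $y_{\bar e a}$ ($\bar e\in E_r$, $a\in E'_s$), where for $\bar e=(\bar u,\bar v)$ and $a=(u,v)$, $y_{\bar e (u,v)}=1$ iff the path $m_E(\bar e)$, traversed from $m_V(\bar u)$ to $m_V(\bar v)$, uses the edge $\{u,v\}$ in the direction from $u$ to $v$. *)

theory Defs
  imports Main
begin

definition simple_graph :: "'a set \<Rightarrow> 'a set set \<Rightarrow> bool" where
  "simple_graph V E \<longleftrightarrow> finite V \<and> (\<forall>e\<in>E. e \<subseteq> V \<and> card e = 2)"

definition connected_graph :: "'a set \<Rightarrow> 'a set set \<Rightarrow> bool" where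
  "connected_graph V E \<longleftrightarrow>
     (\<forall>u\<in>V. \<forall>v\<in>V. (u, v) \<in> {(a, b). {a, b} \<in> E}\<^sup>*)"

(* Virtual edges carry a fixed orientation: E_r is given as a set of ordered pairs
   (u,v), each undirected edge {u,v} appearing with exactly one orientation. *)
definition oriented :: "('b \<times> 'b) set \<Rightarrow> bool" where
  "oriented Er \<longleftrightarrow> (\<forall>(u, v)\<in>Er. u \<noteq> v \<and> (v, u) \<notin> Er)"

definition undirected :: "('b \<times> 'b) set \<Rightarrow> 'b set set" where
  "undirected Er = {{u, v} | u v. (u, v) \<in> Er}"

definition arcs :: "'a set set \<Rightarrow> ('a \<times> 'a) set" where
  "arcs Es = {(u, v). {u, v} \<in> Es}"

definition out_arcs :: "'a set set \<Rightarrow> 'a \<Rightarrow> ('a \<times> 'a) set" where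
  "out_arcs Es u = {a \<in> arcs Es. fst a = u}"

definition in_arcs :: "'a set set \<Rightarrow> 'a \<Rightarrow> ('a \<times> 'a) set" where
  "in_arcs Es u = {a \<in> arcs Es. snd a = u}"

definition loopfree_path :: "'a set set \<Rightarrow> 'a list \<Rightarrow> 'a \<Rightarrow> 'a \<Rightarrow> bool" where
  "loopfree_path Es p s t \<longleftrightarrow> p \<noteq> [] \<and> hd p = s \<and> last p = t \<and> distinct p \<and>
     (\<forall>i. Suc i < length p \<longrightarrow> {p ! i, p ! Suc i} \<in> Es)"

definition path_arcs :: "'a list \<Rightarrow> ('a \<times> 'a) set" where
  "path_arcs p = set (zip p (tl p))"

definition path_edges :: "'a list \<Rightarrow> 'a set set" where
  "path_edges p = {{u, v} | u v. (u, v) \<in> path_arcs p}"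

definition is_mapping ::
  "'b set \<Rightarrow> ('b \<times> 'b) set \<Rightarrow> 'a set \<Rightarrow> 'a set set \<Rightarrow>
   ('b \<Rightarrow> 'a) \<Rightarrow> ('b \<times> 'b \<Rightarrow> 'a list) \<Rightarrow> bool" where
  "is_mapping Vr Er Vs Es mV mE \<longleftrightarrow>
     inj_on mV Vr \<and> mV ` Vr \<subseteq> Vs \<and>
     (\<forall>(u, v)\<in>Er. loopfree_path Es (mE (u, v)) (mV u) (mV v))"

definition feasible_mapping ::
  "'b set \<Rightarrow> ('b \<times> 'b) set \<Rightarrow> 'a set \<Rightarrow> 'a set set \<Rightarrow>
   ('b \<Rightarrow> int) \<Rightarrow> ('b \<times> 'b \<Rightarrow> int) \<Rightarrow> ('a \<Rightarrow> int) \<Rightarrow> ('a set \<Rightarrow> int) \<Rightarrow>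
   ('b \<Rightarrow> 'a) \<Rightarrow> ('b \<times> 'b \<Rightarrow> 'a list) \<Rightarrow> bool" where
  "feasible_mapping Vr Er Vs Es dV dE cV cE mV mE \<longleftrightarrow>
     is_mapping Vr Er Vs Es mV mE \<and>
     (\<forall>u\<in>Vs. (\<Sum>ub\<in>{ub \<in> Vr. mV ub = u}. dV ub) \<le> cV u) \<and>
     (\<forall>e\<in>Es. (\<Sum>eb\<in>{eb \<in> Er. e \<in> path_edges (mE eb)}. dE eb) \<le> cE e)"

definition inc_x :: "('b \<Rightarrow> 'a) \<Rightarrow> 'b \<Rightarrow> 'a \<Rightarrow> int" where
  "inc_x mV ub u = (if mV ub = u then 1 else 0)"

definition inc_y :: "('b \<times> 'b \<Rightarrow> 'a list) \<Rightarrow> 'b \<times> 'b \<Rightarrow> 'a \<times> 'a \<Rightarrow> int" where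
  "inc_y mE eb a = (if a \<in> path_arcs (mE eb) then 1 else 0)"

end

theory Submission
  imports Defs
begin

lemma arcs_finite:
  assumes "simple_graph Vs Es" shows "finite (arcs Es)"
proof -
  have "arcs Es \<subseteq> Vs \<times> Vs" using assms unfolding simple_graph_def arcs_def by auto
  moreover have "finite Vs" using assms unfolding simple_graph_def by auto
  ultimately show ?thesis by (meson finite_SigmaI finite_subset)
qed

theorem proposition2:
  fixes Vr :: "'b set" and Er :: "('b \<times> 'b) set"
    and Vs :: "'a set" and Es :: "'a set set"
    and dV :: "'b \<Rightarrow> int" and dE :: "'b \<times> 'b \<Rightarrow> int"
    and cV :: "'a \<Rightarrow> int" and cE :: "'a set \<Rightarrow> int"
    and mV :: "'b \<Rightarrow> 'a" and mE :: "'b \<times> 'b \<Rightarrow> 'a list"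
  assumes "simple_graph Vr (undirected Er)" and "oriented Er"
    and "connected_graph Vr (undirected Er)"
    and "simple_graph Vs Es" and "connected_graph Vs Es"
    and "feasible_mapping Vr Er Vs Es dV dE cV cE mV mE"
    and "(ub, vb) \<in> Er" and "(u, v) \<in> arcs Es"
  shows "inc_y mE (ub, vb) (u, v)
           \<le> (\<Sum>a\<in>out_arcs Es v - {(v, u)}. inc_y mE (ub, vb) a) + inc_x mV vb v"
proof -
  define p where "p = mE (ub, vb)"
  have lp: "loopfree_path Es p (mV ub) (mV vb)"
    using assms(6,7) unfolding feasible_mapping_def is_mapping_def p_def by auto
  have fin: "finite (out_arcs Es v - {(v, u)})"
    using arcs_finite[OF assms(4)] unfolding out_arcs_def by auto
  have nn: "0 \<le> (\<Sum>a\<in>out_arcs Es v - {(v, u)}. inc_y mE (ub, vb) a)"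
    by (rule sum_nonneg) (simp add: inc_y_def)
  have xn: "0 \<le> inc_x mV vb v" by (simp add: inc_x_def)
  show ?thesis
  proof (cases "(u, v) \<in> path_arcs p")
    case False
    then show ?thesis using nn xn by (simp add: inc_y_def p_def)
  next
    case True
    then obtain i where i: "i < length (zip p (tl p))" "zip p (tl p) ! i = (u, v)"
      unfolding path_arcs_def by (metis in_set_conv_nth)
    have il: "Suc i < length p" using i(1) by simp
    have pu: "p ! i = u" and pv: "p ! Suc i = v"
      using i il by (auto simp: nth_tl)
    show ?thesis
    proof (cases "Suc (Suc i) < length p")
      case False
      then have "Suc i = length p - 1" using il by simp
      then have "v = last p" using pv lp il unfolding loopfree_path_def
        by (metis last_conv_nth)
      then have "v = mV vb" using lp unfolding loopfree_path_def by auto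
      then have "inc_x mV vb v = 1" by (simp add: inc_x_def)
      then show ?thesis using nn by (simp add: inc_y_def)
    next
      case True
      define w where "w = p ! Suc (Suc i)"
      have vw: "(v, w) \<in> path_arcs p" unfolding path_arcs_def w_def pv[symmetric]
        using True by (auto simp: in_set_conv_nth nth_tl intro!: exI[of _ "Suc i"])
      have "{v, w} \<in> Es" using lp True unfolding loopfree_path_def w_def pv[symmetric] by auto
      then have "(v, w) \<in> out_arcs Es v" unfolding out_arcs_def arcs_def by auto
      moreover have "w \<noteq> u"
      proof
        assume "w = u"
        then have "p ! Suc (Suc i) = p ! i" using pu w_def by simp
        moreover have "distinct p" using lp unfolding loopfree_path_def by auto
        ultimately show False using True by (simp add: nth_eq_iff_index_eq)
      qed
      ultimately have mem: "(v, w) \<in> out_arcs Es v - {(v, u)}" by auto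
      have "inc_y mE (ub, vb) (v, w) \<le> (\<Sum>a\<in>out_arcs Es v - {(v, u)}. inc_y mE (ub, vb) a)"
        by (rule member_le_sum[OF mem _ fin]) (simp add: inc_y_def)
      moreover have "inc_y mE (ub, vb) (v, w) = 1" using vw by (simp add: inc_y_def p_def)
      ultimately show ?thesis using xn by (simp add: inc_y_def)
    qed
  qed
qed

end
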